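(* Let $(X,\ast,u,d)$ be a finite GL-rack, let $\Delta=\alpha_1\cdots\alpha_n$ be the disjoint cycle decomposition of its diagonal map (fixed points counted as $1$-cycles), $A_i=\operatorname{supp}(\alpha_i)$, and let $B_1,\dots,B_m$ be the sets obtained by taking, for each cycle length $\ell$ occurring, the union of all $A_i$ with $|A_i|=\ell$. Then for each $1\le j\le m$, $B_j$ is closed under $\ast$, $u$ and $d$, and $(B_j,\ast|_{B_j},u|_{B_j},d|_{B_j})$ is a GL-rack.
   Context: A rack is a set $X$ with a binary operation $\ast$ such that for every $y\in X$ the map $x\mapsto x\ast y$ is a bijection of $X$ and $(x\ast y)\ast z=(x\ast z)\ast(y\ast z)$ for all $x,y,z$. A GL-rack is a quadruple $(X,\ast,u,d)$ where $(X,\ast)$ is a rack and $u,d\colon X\to X$ are maps such that for all $x,y\in X$: $u(d(x\ast x))=d(u(x\ast x))=x$; $u(x\ast y)=u(x)\ast y$ and $d(x\ast y)=d(x)\ast y$; $x\ast u(y)=x\ast d(y)=x\ast y$. The diagonal map is $\Delta(x)=x\ast x$; for a finite GL-rack it is a bijection (rack automorphism) and $\Delta=(u\circ d)^{-1}$. *)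

theory Defs
  imports Main "HOL-Combinatorics.Orbits"
begin

definition rack_on :: "'a set \<Rightarrow> ('a \<Rightarrow> 'a \<Rightarrow> 'a) \<Rightarrow> bool" where
  "rack_on X op \<longleftrightarrow>
     (\<forall>x\<in>X. \<forall>y\<in>X. op x y \<in> X) \<and>
     (\<forall>y\<in>X. bij_betw (\<lambda>x. op x y) X X) \<and>
     (\<forall>x\<in>X. \<forall>y\<in>X. \<forall>z\<in>X. op (op x y) z = op (op x z) (op y z))"

definition gl_rack :: "'a set \<Rightarrow> ('a \<Rightarrow> 'a \<Rightarrow> 'a) \<Rightarrow> ('a \<Rightarrow> 'a) \<Rightarrow> ('a \<Rightarrow> 'a) \<Rightarrow> bool" where
  "gl_rack X op u d \<longleftrightarrow>
     rack_on X op \<and>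
     (\<forall>x\<in>X. u x \<in> X) \<and> (\<forall>x\<in>X. d x \<in> X) \<and>
     (\<forall>x\<in>X. u (d (op x x)) = x \<and> d (u (op x x)) = x) \<and>
     (\<forall>x\<in>X. \<forall>y\<in>X. u (op x y) = op (u x) y \<and> d (op x y) = op (d x) y) \<and>
     (\<forall>x\<in>X. \<forall>y\<in>X. op x (u y) = op x y \<and> op x (d y) = op x y)"

definition diag :: "('a \<Rightarrow> 'a \<Rightarrow> 'a) \<Rightarrow> 'a \<Rightarrow> 'a" where
  "diag op x = op x x"

text \<open>Union of the supports of all cycles of length l of the diagonal map on X
  (fixed points are 1-cycles); the support of the cycle through x is orbit (diag op) x.\<close>
definition cycle_block :: "'a set \<Rightarrow> ('a \<Rightarrow> 'a \<Rightarrow> 'a) \<Rightarrow> nat \<Rightarrow> 'a set" where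
  "cycle_block X op l = {x\<in>X. card (orbit (diag op) x) = l}"

end

theory Submission
  imports Defs
begin

lemma funpow_comm_aux:
  assumes "\<forall>z\<in>S. f z \<in> S" "\<forall>z\<in>S. g (f z) = f (g z)" "x \<in> S"
  shows "(f^^n) x \<in> S \<and> (f^^n) (g x) = g ((f^^n) x)"
  by (induction n) (use assms in auto)

lemma orbit_comm:
  assumes "\<forall>z\<in>S. f z \<in> S" "\<forall>z\<in>S. g (f z) = f (g z)" "x \<in> S"
  shows "orbit f (g x) = g ` orbit f x"
  using funpow_comm_aux[OF assms] unfolding orbit_altdef by auto

lemma orbit_sub:
  assumes "\<forall>z\<in>S. f z \<in> S" "x \<in> S"
  shows "orbit f x \<subseteq> S"
proof -
  have "(f^^n) x \<in> S" for n by (induction n) (use assms in auto)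
  then show ?thesis unfolding orbit_altdef by auto
qed

lemma card_orbit_comm:
  assumes "\<forall>z\<in>S. f z \<in> S" "\<forall>z\<in>S. g (f z) = f (g z)" "x \<in> S" "inj_on g S"
  shows "card (orbit f (g x)) = card (orbit f x)"
proof -
  have "inj_on g (orbit f x)" using assms(4) orbit_sub[OF assms(1,3)] inj_on_subset by blast
  then show ?thesis using orbit_comm[OF assms(1-3)] card_image by metis
qed

theorem lemma3p6:
  fixes X :: "'a set" and op :: "'a \<Rightarrow> 'a \<Rightarrow> 'a" and u d :: "'a \<Rightarrow> 'a" and l :: nat
  assumes "finite X"
    and "gl_rack X op u d"
    and "cycle_block X op l \<noteq> {}"
  shows "(\<forall>x\<in>cycle_block X op l. \<forall>y\<in>cycle_block X op l. op x y \<in> cycle_block X op l)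
       \<and> (\<forall>x\<in>cycle_block X op l. u x \<in> cycle_block X op l)
       \<and> (\<forall>x\<in>cycle_block X op l. d x \<in> cycle_block X op l)
       \<and> gl_rack (cycle_block X op l) op u d"
proof -
  let ?f = "diag op"
  let ?B = "cycle_block X op l"
  have cl: "\<forall>x\<in>X. \<forall>y\<in>X. op x y \<in> X" and bj: "\<forall>y\<in>X. bij_betw (\<lambda>x. op x y) X X"
    and sd: "\<forall>x\<in>X. \<forall>y\<in>X. \<forall>z\<in>X. op (op x y) z = op (op x z) (op y z)"
    and uX: "\<forall>x\<in>X. u x \<in> X" and dX: "\<forall>x\<in>X. d x \<in> X"
    and ud: "\<forall>x\<in>X. u (d (op x x)) = x \<and> d (u (op x x)) = x"
    and uop: "\<forall>x\<in>X. \<forall>y\<in>X. u (op x y) = op (u x) y \<and> d (op x y) = op (d x) y"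
    and opu: "\<forall>x\<in>X. \<forall>y\<in>X. op x (u y) = op x y \<and> op x (d y) = op x y"
    using assms(2) unfolding gl_rack_def rack_on_def by blast+
  have fX: "\<forall>z\<in>X. ?f z \<in> X" using cl unfolding diag_def by auto
  have Bsub: "?B \<subseteq> X" unfolding cycle_block_def by auto
  have opB: "op x y \<in> ?B" if "x \<in> ?B" "y \<in> X" for x y
  proof -
    have x: "x \<in> X" using that Bsub by auto
    have "\<forall>z\<in>X. op (?f z) y = ?f (op z y)" unfolding diag_def
    proof
      fix z assume "z \<in> X"
      then show "op (op z z) y = op (op z y) (op z y)" using sd that(2) by blast
    qed
    moreover have "inj_on (\<lambda>z. op z y) X" using bj that(2) bij_betw_def by blast
    ultimately have "card (orbit ?f (op x y)) = card (orbit ?f x)"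
      using card_orbit_comm[OF fX, of "\<lambda>z. op z y" x] x by auto
    then show ?thesis using that cl x unfolding cycle_block_def by auto
  qed
  have uimg: "u ` X = X"
  proof
    show "u ` X \<subseteq> X" using uX by auto
    show "X \<subseteq> u ` X"
    proof
      fix x assume "x \<in> X"
      then have "x = u (d (op x x))" "d (op x x) \<in> X" using ud dX cl by auto
      then show "x \<in> u ` X" by blast
    qed
  qed
  have dimg: "d ` X = X"
  proof
    show "d ` X \<subseteq> X" using dX by auto
    show "X \<subseteq> d ` X"
    proof
      fix x assume "x \<in> X"
      then have "x = d (u (op x x))" "u (op x x) \<in> X" using ud uX cl by auto
      then show "x \<in> d ` X" by blast
    qed
  qed
  have uinj: "inj_on u X" using uimg assms(1) by (simp add: eq_card_imp_inj_on)
  have dinj: "inj_on d X" using dimg assms(1) by (simp add: eq_card_imp_inj_on)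
  have uB: "u x \<in> ?B" if "x \<in> ?B" for x
  proof -
    have x: "x \<in> X" using that Bsub by auto
    have "\<forall>z\<in>X. u (?f z) = ?f (u z)" using uop opu uX unfolding diag_def by auto
    then have "card (orbit ?f (u x)) = card (orbit ?f x)"
      using card_orbit_comm[OF fX, of u x] x uinj by auto
    then show ?thesis using that uX x unfolding cycle_block_def by auto
  qed
  have dB: "d x \<in> ?B" if "x \<in> ?B" for x
  proof -
    have x: "x \<in> X" using that Bsub by auto
    have "\<forall>z\<in>X. d (?f z) = ?f (d z)" using uop opu dX unfolding diag_def by auto
    then have "card (orbit ?f (d x)) = card (orbit ?f x)"
      using card_orbit_comm[OF fX, of d x] x dinj by auto
    then show ?thesis using that dX x unfolding cycle_block_def by auto
  qed
  have finB: "finite ?B" using Bsub assms(1) finite_subset by blast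
  have bjB: "bij_betw (\<lambda>x. op x y) ?B ?B" if "y \<in> ?B" for y
  proof -
    have y: "y \<in> X" using that Bsub by auto
    have "inj_on (\<lambda>z. op z y) X" using bj y bij_betw_def by blast
    then have inj: "inj_on (\<lambda>z. op z y) ?B" using Bsub inj_on_subset by blast
    have sub: "(\<lambda>z. op z y) ` ?B \<subseteq> ?B" using opB y by auto
    have "(\<lambda>z. op z y) ` ?B = ?B" using endo_inj_surj[OF finB sub inj] .
    then show ?thesis using inj bij_betw_def by blast
  qed
  have closed: "\<forall>x\<in>?B. \<forall>y\<in>?B. op x y \<in> ?B" using opB Bsub by auto
  have "gl_rack ?B op u d"
  proof -
    have "\<forall>x\<in>?B. \<forall>y\<in>?B. \<forall>z\<in>?B. op (op x y) z = op (op x z) (op y z)"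
      using sd Bsub by blast
    moreover have "\<forall>x\<in>?B. u (d (op x x)) = x \<and> d (u (op x x)) = x" using ud Bsub by blast
    moreover have "\<forall>x\<in>?B. \<forall>y\<in>?B. u (op x y) = op (u x) y \<and> d (op x y) = op (d x) y"
      using uop Bsub by blast
    moreover have "\<forall>x\<in>?B. \<forall>y\<in>?B. op x (u y) = op x y \<and> op x (d y) = op x y"
      using opu Bsub by blast
    ultimately show ?thesis unfolding gl_rack_def rack_on_def
      using closed bjB uB dB by blast
  qed
  then show ?thesis using closed uB dB by auto
qed

end
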